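(* Let $Q>0$ and $\Gamma>0$. Let $f$ be a nonnegative random variable with a continuous probability density function, and let $I$ be a nonnegative random variable independent of $f$ with $\mathbb{E}[I]=\Gamma$. Let $\mu_a>0$ satisfy $\mathbb{E}\left[\left(\frac{1}{\mu_a}-\frac{1+I}{f}\right)^+\right]=Q$, and let $\mu_p>0$ satisfy $\mathbb{E}\left[\left(\frac{1}{\mu_p}-\frac{1+\Gamma}{f}\right)^+\right]=Q$. Define $$C^{{\rm ER},a}_{\rm PR,WF}=\mathbb{E}\left[\left(\log\frac{f}{\mu_a(1+I)}\right)^+\right],\qquad C^{{\rm ER},p}_{\rm PR,WF}=\mathbb{E}\left[\left(\log\frac{f}{\mu_p(1+\Gamma)}\right)^+\right].$$ Then $C^{{\rm ER},a}_{\rm PR,WF}\geq C^{{\rm ER},p}_{\rm PR,WF}$.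
   Context: $(a)^+=\max(0,a)$. Setting: a primary radio (PR) fading link with channel power gain $f$ and unit noise power. $I$ is the interference power from a cognitive radio at the PR receiver, independent of $f$. The average-interference-power (AIP) case has random $I$ with $\mathbb{E}[I]=\Gamma$. The peak-interference-power (PIP) case has interference equal to $\Gamma$ always. The PR uses water-filling power control $q=(1/\mu-(1+I)/f)^+$ (respectively $(1/\mu-(1+\Gamma)/f)^+$), subject to average transmit power $Q$. Thus $C^{{\rm ER},a}_{\rm PR,WF}$ and $C^{{\rm ER},p}_{\rm PR,WF}$ are the PR ergodic capacities $\max_{q\ge0,\,\mathbb{E}[q]\le Q}\mathbb{E}[\log(1+fq/(1+I))]$ (respectively with $I$ replaced by $\Gamma$), attained by water-filling. *)

theory Defs
  imports "HOL-Probability.Probability"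
begin

definition pos_part :: "real \<Rightarrow> real" where
  "pos_part a = max 0 a"

end

theory Submission
  imports Defs
begin

lemma wf_opt:
  fixes x \<mu> q :: real
  assumes "x > 0" "\<mu> > 0" "q \<ge> 0"
  shows "ln (1 + x * q) + \<mu> * pos_part (1/\<mu> - 1/x) \<le> pos_part (ln (x/\<mu>)) + \<mu> * q"
proof (cases "x \<le> \<mu>")
  case True
  have "1/\<mu> - 1/x \<le> 0" using True assms by (simp add: field_simps)
  hence p: "pos_part (1/\<mu> - 1/x) = 0" by (simp add: pos_part_def)
  have "ln (1 + x*q) \<le> x*q" using assms by (intro ln_add_one_self_le_self) (simp add: mult_nonneg_nonneg)
  also have "\<dots> \<le> \<mu> * q" using True assms by (intro mult_right_mono) auto
  finally show ?thesis using p by (simp add: pos_part_def)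
next
  case False
  have p: "pos_part (1/\<mu> - 1/x) = 1/\<mu> - 1/x" using False assms by (simp add: pos_part_def field_simps)
  have l: "ln (x/\<mu>) > 0" using False assms by simp
  hence p2: "pos_part (ln (x/\<mu>)) = ln (x/\<mu>)" by (simp add: pos_part_def)
  have pos: "1 + x*q > 0" using assms by (simp add: add_pos_nonneg mult_nonneg_nonneg)
  have "ln (1 + x*q) - ln (x/\<mu>) = ln ((1 + x*q) / (x/\<mu>))"
    using pos assms by (simp add: ln_div ln_mult)
  also have "\<dots> \<le> (1 + x*q) / (x/\<mu>) - 1" using pos assms by (intro ln_le_minus_one) simp
  also have "\<dots> = \<mu>*q + \<mu>/x - 1" using assms by (simp add: field_simps)
  finally have "ln (1 + x*q) - ln (x/\<mu>) \<le> \<mu>*q + \<mu>/x - 1" .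
  moreover have "\<mu>*(1/\<mu> - 1/x) = 1 - \<mu>/x" using assms by (simp add: field_simps)
  ultimately show ?thesis unfolding p p2 by linarith
qed

lemma tangent:
  fixes a i G :: real
  assumes "a \<ge> 0" "i \<ge> 0" "G > 0"
  shows "ln (1 + a/(1+G)) + a/((1+G)*(1+G+a))*G \<le> ln (1 + a/(1+i)) + a/((1+G)*(1+G+a))*i"
proof -
  define p where "p = 1 + i"
  define r where "r = 1 + G"
  have p: "p > 0" and r: "r > 0" using assms by (auto simp: p_def r_def)
  define YY where "YY = (p+a)* r/(p*(r+a))"
  have YY: "YY > 0" using p r assms by (simp add: YY_def)
  have e1: "ln (1 + a/p) - ln (1 + a/r) = ln YY"
  proof -
    have "(1+a/p)/(1+a/r) = YY" using p r assms by (simp add: YY_def field_simps)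
    moreover have "1+a/p > 0" "1+a/r > 0" using p r assms by (auto intro: add_pos_nonneg)
    ultimately show ?thesis by (auto simp: ln_div)
  qed
  have "- ln YY = ln (1/YY)" using YY by (simp add: ln_div)
  also have "\<dots> \<le> 1/YY - 1" using YY by (intro ln_le_minus_one) simp
  finally have e2: "ln YY \<ge> 1 - 1/YY" by simp
  have e3: "1 - 1/YY = a*(r-p)/((p+a)*r)"
  proof -
    have d: "(p+a)*r \<noteq> 0" using p r assms by auto
    have "1/YY = p*(r+a)/((p+a)*r)" by (simp add: YY_def)
    moreover have "1 - p*(r+a)/((p+a)*r) = ((p+a)*r - p*(r+a))/((p+a)*r)"
      using d by (simp add: diff_divide_distrib)
    moreover have "(p+a)*r - p*(r+a) = a*(r-p)" by (simp add: algebra_simps)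
    ultimately show ?thesis by simp
  qed
  have e4: "a*(r-p)/((p+a)*r) \<ge> a/(r*(r+a))*(r - p)"
  proof -
    have eq: "a/(r*(r+a))*(r - p) = a*(r-p)/(r*(r+a))" by simp
    have pp: "0 < ((p+a)*r) * (r*(r+a))" using p r assms by simp
    show ?thesis
    proof (cases "p \<le> r")
      case True
      have "a*(r-p)/(r*(r+a)) \<le> a*(r-p)/((p+a)*r)"
        using True pp assms p r by (intro divide_left_mono) (auto simp: algebra_simps intro: mult_left_mono mult_right_mono)
      thus ?thesis using eq by simp
    next
      case False
      have "a*(r-p)/(r*(r+a)) \<le> a*(r-p)/((p+a)*r)"
        using False pp assms p r
        by (intro divide_left_mono_neg) (auto simp: algebra_simps mult_nonneg_nonpos intro: mult_left_mono mult_right_mono)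
      thus ?thesis using eq by simp
    qed
  qed
  have "ln (1 + a/p) - ln (1 + a/r) \<ge> a/(r*(r+a))*(r - p)" using e1 e2 e3 e4 by linarith
  moreover have "a/(r*(r+a))*(r - p) = a/(r*(r+a))*G - a/(r*(r+a))*i"
  proof -
    have "r - p = G - i" unfolding p_def r_def by simp
    thus ?thesis by (simp only: right_diff_distrib)
  qed
  ultimately show ?thesis unfolding p_def[symmetric] r_def[symmetric] by linarith
qed

lemma ident:
  fixes x \<mu> G :: real
  assumes "x > 0" "\<mu> > 0" "G > 0"
  shows "pos_part (ln (x / (\<mu> * (1 + G)))) = ln (1 + x * pos_part (1/\<mu> - (1+G)/x) / (1+G))"
proof (cases "x / (1+G) \<le> \<mu>")
  case True
  have "1/\<mu> - (1+G)/x \<le> 0" using True assms by (simp add: field_simps)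
  moreover have "ln (x / (\<mu> * (1 + G))) \<le> 0" using True assms by (simp add: field_simps)
  ultimately show ?thesis by (simp add: pos_part_def)
next
  case False
  have "1/\<mu> - (1+G)/x > 0" using False assms by (simp add: field_simps)
  moreover have "ln (x / (\<mu> * (1 + G))) > 0"
  proof -
    have "\<mu> * (1+G) > 0" using assms by (intro mult_pos_pos) auto
    moreover have "\<mu> * (1+G) < x" using False assms by (auto simp: field_simps)
    ultimately show ?thesis by (intro ln_gt_zero) (simp add: less_divide_eq)
  qed
  moreover have "1 + x * (1/\<mu> - (1+G)/x) / (1+G) = x / (\<mu> * (1 + G))"
  proof -
    have d: "\<mu> * (1+G) \<noteq> 0" "x \<noteq> 0" "1+G \<noteq> 0" using assms by auto
    have "x * (1/\<mu> - (1+G)/x) / (1+G) = x/(\<mu>*(1+G)) - 1"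
      using d by (simp add: right_diff_distrib diff_divide_distrib)
    thus ?thesis by simp
  qed
  ultimately show ?thesis by (simp add: pos_part_def)
qed

lemma pos_part_meas[measurable]:
  "h \<in> borel_measurable N \<Longrightarrow> (\<lambda>x. pos_part (h x)) \<in> borel_measurable N"
  unfolding pos_part_def by (intro borel_measurable_max) auto

lemma pos_part_nonneg: "pos_part x \<ge> 0" by (simp add: pos_part_def)

theorem theorem4p2:
  fixes M :: "'a measure" and f I :: "'a \<Rightarrow> real" and g :: "real \<Rightarrow> real"
    and Q \<Gamma> \<mu>a \<mu>p :: real
  assumes "prob_space M"
    and "Q > 0" and "\<Gamma> > 0"
    and f_dens: "distributed M lborel f (\<lambda>x. ennreal (g x))"
    and g_cont: "continuous_on {0..} g"
    and f_nonneg: "AE \<omega> in M. f \<omega> \<ge> 0"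
    and I_meas: "I \<in> borel_measurable M"
    and I_nonneg: "AE \<omega> in M. I \<omega> \<ge> 0"
    and indep: "prob_space.indep_var M borel f borel I"
    and I_mean: "(\<integral>\<^sup>+ \<omega>. ennreal (I \<omega>) \<partial>M) = ennreal \<Gamma>"
    and "\<mu>a > 0"
    and mu_a: "(\<integral>\<^sup>+ \<omega>. ennreal (pos_part (1 / \<mu>a - (1 + I \<omega>) / f \<omega>)) \<partial>M) = ennreal Q"
    and "\<mu>p > 0"
    and mu_p: "(\<integral>\<^sup>+ \<omega>. ennreal (pos_part (1 / \<mu>p - (1 + \<Gamma>) / f \<omega>)) \<partial>M) = ennreal Q"
  shows "(\<integral>\<^sup>+ \<omega>. ennreal (pos_part (ln (f \<omega> / (\<mu>a * (1 + I \<omega>))))) \<partial>M)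
       \<ge> (\<integral>\<^sup>+ \<omega>. ennreal (pos_part (ln (f \<omega> / (\<mu>p * (1 + \<Gamma>))))) \<partial>M)"
proof -
  interpret prob_space M by fact
  have fm[measurable]: "f \<in> borel_measurable M"
    using distributed_measurable[OF f_dens] by simp
  note I_meas[measurable]
  have gm: "(\<lambda>x. ennreal (g x)) \<in> borel_measurable lborel"
    using distributed_borel_measurable[OF f_dens] .
  have "AE x in distr M lborel f. x \<noteq> 0"
    unfolding distributed_distr_eq_density[OF f_dens]
    using AE_lborel_singleton[of 0] by (subst AE_density[OF gm]) auto
  hence f_ne: "AE \<omega> in M. f \<omega> \<noteq> 0"
    by (rule AE_distrD[rotated]) (use distributed_measurable[OF f_dens] in simp)
  have good: "AE \<omega> in M. f \<omega> > 0 \<and> I \<omega> \<ge> 0"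
    using f_ne f_nonneg I_nonneg by eventually_elim auto
  define phi where "phi x = pos_part (1/\<mu>p - (1+\<Gamma>)/x)" for x
  define cf where "cf x = x * phi x / ((1+\<Gamma>)*(1+\<Gamma>+x*phi x))" for x
  define H where "H \<omega> = ln (1 + f \<omega> * phi (f \<omega>) / (1 + I \<omega>))" for \<omega>
  have phim[measurable]: "phi \<in> borel_measurable borel" unfolding phi_def by measurable
  have cfm[measurable]: "cf \<in> borel_measurable borel" unfolding cf_def by measurable
  have Hm[measurable]: "H \<in> borel_measurable M" unfolding H_def by measurable
  have phi0: "phi x \<ge> 0" for x by (simp add: phi_def pos_part_nonneg)
  let ?Ca = "\<integral>\<^sup>+ \<omega>. ennreal (pos_part (ln (f \<omega> / (\<mu>a * (1 + I \<omega>))))) \<partial>M"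
  let ?Cp = "\<integral>\<^sup>+ \<omega>. ennreal (pos_part (ln (f \<omega> / (\<mu>p * (1 + \<Gamma>))))) \<partial>M"
  let ?qa = "\<lambda>\<omega>. pos_part (1 / \<mu>a - (1 + I \<omega>) / f \<omega>)"
  \<comment> \<open>Step 1: optimality of water-filling\<close>
  have "(\<integral>\<^sup>+ \<omega>. ennreal (H \<omega>) \<partial>M) + ennreal \<mu>a * ennreal Q
      = (\<integral>\<^sup>+ \<omega>. ennreal (H \<omega>) + ennreal \<mu>a * ennreal (?qa \<omega>) \<partial>M)"
    by (subst nn_integral_add) (auto simp: nn_integral_cmult mu_a)
  also have "\<dots> \<le> (\<integral>\<^sup>+ \<omega>. ennreal (pos_part (ln (f \<omega> / (\<mu>a * (1 + I \<omega>))))) + ennreal \<mu>a * ennreal (phi (f \<omega>)) \<partial>M)"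
  proof (rule nn_integral_mono_AE)
    show "AE \<omega> in M. ennreal (H \<omega>) + ennreal \<mu>a * ennreal (?qa \<omega>)
       \<le> ennreal (pos_part (ln (f \<omega> / (\<mu>a * (1 + I \<omega>))))) + ennreal \<mu>a * ennreal (phi (f \<omega>))"
      using good
    proof eventually_elim
      case (elim \<omega>)
      define x where "x = f \<omega> / (1 + I \<omega>)"
      have x: "x > 0" using elim by (simp add: x_def)
      have w: "ln (1 + x * phi (f \<omega>)) + \<mu>a * pos_part (1/\<mu>a - 1/x) \<le> pos_part (ln (x/\<mu>a)) + \<mu>a * phi (f \<omega>)"
        using wf_opt[OF x \<open>\<mu>a > 0\<close> phi0] .
      have e1: "x * phi (f \<omega>) = f \<omega> * phi (f \<omega>) / (1 + I \<omega>)" by (simp add: x_def)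
      have e2: "1/x = (1 + I \<omega>) / f \<omega>" by (simp add: x_def)
      have e3: "x/\<mu>a = f \<omega> / (\<mu>a * (1 + I \<omega>))" by (simp add: x_def mult.commute)
      have w': "H \<omega> + \<mu>a * ?qa \<omega> \<le> pos_part (ln (f \<omega> / (\<mu>a * (1 + I \<omega>)))) + \<mu>a * phi (f \<omega>)"
        using w unfolding e1 e2 e3 H_def .
      have H0: "H \<omega> \<ge> 0" unfolding H_def using elim phi0[of "f \<omega>"] by simp
      have q0: "\<mu>a * ?qa \<omega> \<ge> 0" using \<open>\<mu>a > 0\<close> pos_part_nonneg by simp
      have p0: "\<mu>a * phi (f \<omega>) \<ge> 0" using \<open>\<mu>a > 0\<close> phi0 by simp
      have "ennreal (H \<omega>) + ennreal (\<mu>a * ?qa \<omega>) \<le> ennreal (pos_part (ln (f \<omega> / (\<mu>a * (1 + I \<omega>))))) + ennreal (\<mu>a * phi (f \<omega>))"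
        using w' H0 q0 p0 pos_part_nonneg by (simp add: ennreal_plus[symmetric] del: ennreal_plus)
      moreover have "0 \<le> \<mu>a" using \<open>\<mu>a > 0\<close> by simp
      ultimately show ?case using pos_part_nonneg phi0 by (simp add: ennreal_mult)
    qed
  qed
  also have "\<dots> = ?Ca + ennreal \<mu>a * ennreal Q"
    by (subst nn_integral_add) (auto simp: nn_integral_cmult mu_p[folded phi_def])
  finally have st: "(\<integral>\<^sup>+ \<omega>. ennreal (H \<omega>) \<partial>M) + ennreal \<mu>a * ennreal Q \<le> ?Ca + ennreal \<mu>a * ennreal Q" .
  have fin1: "ennreal \<mu>a * ennreal Q \<noteq> \<top>" by (simp add: ennreal_mult_eq_top_iff)
  have step1: "(\<integral>\<^sup>+ \<omega>. ennreal (H \<omega>) \<partial>M) \<le> ?Ca"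
    using st fin1 by (simp add: ennreal_add_left_cancel_le add.commute[of _ "ennreal \<mu>a * ennreal Q"])
  \<comment> \<open>Step 2: Jensen via tangent line and independence\<close>
  have cf1: "cf x \<le> 1" if "x > 0" for x
  proof -
    have True: "x * phi x \<ge> 0" using that phi0[of x] by simp
    have "x * phi x \<le> (1+\<Gamma>)*(1+\<Gamma>+x*phi x)"
      using True \<open>\<Gamma> > 0\<close> by (simp add: algebra_simps)
    moreover have "(1+\<Gamma>)*(1+\<Gamma>+x*phi x) > 0" using True \<open>\<Gamma> > 0\<close> by simp
    ultimately show ?thesis by (simp add: cf_def)
  qed
  let ?K = "(\<integral>\<^sup>+ \<omega>. ennreal (cf (f \<omega>)) \<partial>M) * ennreal \<Gamma>"
  have Kfin: "?K \<noteq> \<top>"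
  proof -
    have "(\<integral>\<^sup>+ \<omega>. ennreal (cf (f \<omega>)) \<partial>M) \<le> (\<integral>\<^sup>+ \<omega>. 1 \<partial>M)"
      using good by (intro nn_integral_mono_AE) (auto elim!: eventually_mono simp: cf1)
    also have "\<dots> = 1" by (simp add: emeasure_space_1)
    finally show ?thesis using ennreal_mult_less_top by (auto simp: top_unique ennreal_mult_eq_top_iff)
  qed
  have indepK: "(\<integral>\<^sup>+ \<omega>. ennreal (cf (f \<omega>)) * ennreal (I \<omega>) \<partial>M) = ?K"
  proof -
    have iv: "indep_var borel ((\<lambda>x. ennreal (cf x)) \<circ> f) borel (ennreal \<circ> I)"
      by (rule indep_var_compose[OF indep]) auto
    hence iv': "indep_vars (\<lambda>_. borel) (case_bool ((\<lambda>x. ennreal (cf x)) \<circ> f) (ennreal \<circ> I)) UNIV"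
    proof -
      have "case_bool (borel::ennreal measure) borel = (\<lambda>_. borel)" by (auto simp: fun_eq_iff split: bool.split)
      thus ?thesis using iv unfolding indep_var_def by simp
    qed
    have "(\<integral>\<^sup>+\<omega>. (\<Prod>i\<in>UNIV. case_bool ((\<lambda>x. ennreal (cf x)) \<circ> f) (ennreal \<circ> I) i \<omega>) \<partial>M)
       = (\<Prod>i\<in>UNIV. \<integral>\<^sup>+\<omega>. case_bool ((\<lambda>x. ennreal (cf x)) \<circ> f) (ennreal \<circ> I) i \<omega> \<partial>M)"
      by (rule indep_vars_nn_integral) (use iv' in auto)
    thus ?thesis by (simp add: UNIV_bool I_mean o_def mult.commute)
  qed
  have "?Cp + ?K = (\<integral>\<^sup>+ \<omega>. ennreal (pos_part (ln (f \<omega> / (\<mu>p * (1 + \<Gamma>))))) + ennreal (cf (f \<omega>)) * ennreal \<Gamma> \<partial>M)"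
    by (subst nn_integral_add) (auto simp: nn_integral_multc)
  also have "\<dots> \<le> (\<integral>\<^sup>+ \<omega>. ennreal (H \<omega>) + ennreal (cf (f \<omega>)) * ennreal (I \<omega>) \<partial>M)"
  proof (rule nn_integral_mono_AE)
    show "AE \<omega> in M. ennreal (pos_part (ln (f \<omega> / (\<mu>p * (1 + \<Gamma>))))) + ennreal (cf (f \<omega>)) * ennreal \<Gamma>
        \<le> ennreal (H \<omega>) + ennreal (cf (f \<omega>)) * ennreal (I \<omega>)"
      using good
    proof eventually_elim
      case (elim \<omega>)
      define a where "a = f \<omega> * phi (f \<omega>)"
      have a0: "a \<ge> 0" using elim phi0[of "f \<omega>"] by (simp add: a_def)
      have t: "ln (1 + a/(1+\<Gamma>)) + a/((1+\<Gamma>)*(1+\<Gamma>+a)) * \<Gamma> \<le> ln (1 + a/(1+I \<omega>)) + a/((1+\<Gamma>)*(1+\<Gamma>+a)) * I \<omega>"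
        using tangent[OF a0 _ \<open>\<Gamma> > 0\<close>] elim by simp
      have id: "pos_part (ln (f \<omega> / (\<mu>p * (1 + \<Gamma>)))) = ln (1 + a/(1+\<Gamma>))"
        using ident[of "f \<omega>" \<mu>p \<Gamma>] elim \<open>\<mu>p > 0\<close> \<open>\<Gamma> > 0\<close> by (simp add: a_def phi_def)
      have cfa: "cf (f \<omega>) = a/((1+\<Gamma>)*(1+\<Gamma>+a))" by (simp add: cf_def a_def)
      have c0: "cf (f \<omega>) \<ge> 0" using a0 \<open>\<Gamma> > 0\<close> by (simp add: cfa)
      have H0: "H \<omega> \<ge> 0" unfolding H_def using elim phi0[of "f \<omega>"] by simp
      have lp0: "ln (1 + a/(1+\<Gamma>)) \<ge> 0" using a0 \<open>\<Gamma> > 0\<close> by simp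
      have HH: "H \<omega> = ln (1 + a/(1+I \<omega>))" by (simp add: H_def a_def)
      have "ennreal (pos_part (ln (f \<omega> / (\<mu>p * (1 + \<Gamma>))))) + ennreal (cf (f \<omega>) * \<Gamma>)
          \<le> ennreal (H \<omega>) + ennreal (cf (f \<omega>) * I \<omega>)"
        using t H0 c0 elim lp0 \<open>\<Gamma> > 0\<close> pos_part_nonneg unfolding id HH cfa[symmetric]
        by (simp add: ennreal_plus[symmetric] del: ennreal_plus)
      thus ?case using c0 elim \<open>\<Gamma> > 0\<close> by (simp add: ennreal_mult)
    qed
  qed
  also have "\<dots> = (\<integral>\<^sup>+ \<omega>. ennreal (H \<omega>) \<partial>M) + ?K"
    by (subst nn_integral_add) (auto simp: indepK)
  finally have step2: "?Cp \<le> (\<integral>\<^sup>+ \<omega>. ennreal (H \<omega>) \<partial>M)"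
    using Kfin by (simp add: add.commute[of _ ?K] ennreal_add_left_cancel_le)
  show ?thesis using step1 step2 by simp
qed

end
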